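(* Let $f:[0,\infty)\to[0,\infty)$ be continuously differentiable with $f>0$ on $[t_0,\infty)$ for some $t_0\ge0$ and $f\in C^2([t_0,\infty))$, let $g=\log f$ on $[t_0,\infty)$, assume condition (H1) of the context with the pair $(q,p)$, and set $F(t)=\int_0^t f(s)\,ds$. Then $$\limsup_{t\to\infty}\left(\frac{F(t)\log F(t)}{f(t)}\right)'\le\frac1p,$$ where $1/\infty=0$.
   Context: Condition (H1): (i) $g'(t)>0$ and $g''(t)>0$ for all $t\ge t_0$, and there is a pair $(q,p)$ with either $q=1$ and $p\in(0,\infty]$, or $q\in(1,\infty)$ and $p\in(0,\infty)$, such that $\lim_{t\to\infty}\frac{g'(t)^2}{g(t)g''(t)}=q$ and $\lim_{t\to\infty}\frac{tg'(t)}{g(t)}=p$; (ii) if $q=1$, then $tg'(t)/g(t)$ is nondecreasing on $[t_0,\infty)$ and there exist $k\in\mathbb{N}$ and $\hat g\in C^2([t_0,\infty))$ with $f=\exp_k\circ\hat g$ and $\hat g'/\hat g$ nonincreasing on $[t_0,\infty)$ ($\exp_1=\exp$, $\exp_k=\exp_{k-1}\circ\exp$). *)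

theory Defs
  imports "HOL-Analysis.Analysis"
begin

definition exp_iter :: "nat \<Rightarrow> real \<Rightarrow> real" where
  "exp_iter k = (exp ^^ k)"

end

theory Submission
  imports Defs "HOL-Real_Asymp.Real_Asymp"
begin

lemma at_Ici_real: "a < x \<Longrightarrow> at x within {a..} = at (x::real)"
  using at_within_interior[of x "{a..}"] by simp

lemma cmp_deriv:
  fixes h k h' k' :: "real \<Rightarrow> real"
  assumes ab: "a \<le> b"
    and dh: "\<And>x. a \<le> x \<Longrightarrow> x \<le> b \<Longrightarrow> (h has_real_derivative h' x) (at x)"
    and dk: "\<And>x. a \<le> x \<Longrightarrow> x \<le> b \<Longrightarrow> (k has_real_derivative k' x) (at x)"
    and le: "\<And>x. a \<le> x \<Longrightarrow> x \<le> b \<Longrightarrow> k' x \<le> h' x"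
  shows "k b - k a \<le> h b - h a"
proof -
  have "(\<lambda>x. h x - k x) a \<le> (\<lambda>x. h x - k x) b"
  proof (rule DERIV_nonneg_imp_nondecreasing[OF ab])
    fix x assume x: "a \<le> x" "x \<le> b"
    have "((\<lambda>x. h x - k x) has_real_derivative h' x - k' x) (at x)"
      using dh[OF x] dk[OF x] by (rule DERIV_diff)
    then show "\<exists>y. ((\<lambda>x. h x - k x) has_real_derivative y) (at x) \<and> 0 \<le> y"
      using le[OF x] by auto
  qed
  then show ?thesis by simp
qed

lemma lim1: "((\<lambda>y::real. ln y / y) \<longlongrightarrow> 0) at_top" by real_asymp
lemma lim2: "((\<lambda>y::real. 1 / y) \<longlongrightarrow> 0) at_top" by real_asymp
lemma lim3: "((\<lambda>y::real. y ^ 3 / exp y) \<longlongrightarrow> 0) at_top" by real_asymp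
lemma lim4: "filterlim (\<lambda>y::real. exp y / y ^ 2) at_top at_top" by real_asymp

theorem lemma2p12:
  fixes f f1 f2 g1 g2 :: "real \<Rightarrow> real" and t0 q :: real and p :: ereal
  assumes t0: "t0 \<ge> 0"
    and f_nonneg: "\<And>x. x \<ge> 0 \<Longrightarrow> f x \<ge> 0"
    and f_pos: "\<And>x. x \<ge> t0 \<Longrightarrow> f x > 0"
    and f1: "\<And>x. x \<ge> 0 \<Longrightarrow> (f has_real_derivative f1 x) (at x within {0..})"
    and f1_cont: "continuous_on {0..} f1"
    and f2: "\<And>x. x \<ge> t0 \<Longrightarrow> (f1 has_real_derivative f2 x) (at x within {t0..})"
    and f2_cont: "continuous_on {t0..} f2"
    and g1: "\<And>x. x \<ge> t0 \<Longrightarrow> ((\<lambda>t. ln (f t)) has_real_derivative g1 x) (at x within {t0..})"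
    and g2: "\<And>x. x \<ge> t0 \<Longrightarrow> (g1 has_real_derivative g2 x) (at x within {t0..})"
    and H1_pos: "\<And>t. t \<ge> t0 \<Longrightarrow> g1 t > 0 \<and> g2 t > 0"
    and qp: "(q = 1 \<and> 0 < p) \<or> (q > 1 \<and> 0 < p \<and> p < \<infinity>)"
    and lim_q: "((\<lambda>t. (g1 t)\<^sup>2 / (ln (f t) * g2 t)) \<longlongrightarrow> q) at_top"
    and lim_p: "((\<lambda>t. ereal (t * g1 t / ln (f t))) \<longlongrightarrow> p) at_top"
    and H1_ii: "q = 1 \<Longrightarrow>
        (\<forall>x y. t0 \<le> x \<longrightarrow> x \<le> y \<longrightarrow> x * g1 x / ln (f x) \<le> y * g1 y / ln (f y)) \<and>
        (\<exists>k::nat. k \<ge> 1 \<and> (\<exists>h h1 h2 :: real \<Rightarrow> real.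
            (\<forall>x. x \<ge> t0 \<longrightarrow> (h has_real_derivative h1 x) (at x within {t0..})) \<and>
            (\<forall>x. x \<ge> t0 \<longrightarrow> (h1 has_real_derivative h2 x) (at x within {t0..})) \<and>
            continuous_on {t0..} h2 \<and>
            (\<forall>x. x \<ge> t0 \<longrightarrow> f x = exp_iter k (h x)) \<and>
            (\<forall>x y. t0 \<le> x \<longrightarrow> x \<le> y \<longrightarrow> h1 y / h y \<le> h1 x / h x)))"
  shows "Limsup at_top (\<lambda>t. ereal (deriv (\<lambda>s. integral {0..s} f * ln (integral {0..s} f) / f s) t))
           \<le> 1 / p"
proof -
  define G where "G = (\<lambda>t. ln (f t))"
  define F where "F = (\<lambda>s. integral {0..s} f)"
  define a where "a = t0 + 1"
  have a: "a > t0" "a > 0" using t0 by (auto simp: a_def)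
  have q1: "q \<ge> 1" using qp by auto
  have fcont: "continuous_on {0..} f"
    by (rule DERIV_continuous_on[of _ _ f1]) (use f1 in auto)
  have dF: "(F has_real_derivative f x) (at x)" if x: "x > 0" for x
  proof -
    have "continuous_on {0..x+1} f" using fcont by (rule continuous_on_subset) auto
    then have "(F has_real_derivative f x) (at x within {0..x+1})"
      unfolding F_def using x by (intro integral_has_real_derivative) auto
    then show ?thesis using at_within_Icc_at[of 0 x "x+1"] x by simp
  qed
  have dG: "(G has_real_derivative g1 x) (at x)" if x: "x > t0" for x
    using g1[of x] at_Ici_real[OF x] x unfolding G_def by simp
  have dg1: "(g1 has_real_derivative g2 x) (at x)" if x: "x > t0" for x
    using g2[of x] at_Ici_real[OF x] x by simp
  have fpos: "f x > 0" and g1pos: "g1 x > 0" and g2pos: "g2 x > 0" if "x \<ge> t0" for x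
    using f_pos H1_pos that by auto
  have df: "(f has_real_derivative f x * g1 x) (at x)" if x: "x > t0" for x
  proof -
    have d1: "(f has_real_derivative f1 x) (at x)" using f1[of x] at_Ici_real[of 0 x] x t0 by simp
    have fx: "f x > 0" using fpos x by simp
    have "(G has_real_derivative f1 x / f x) (at x)"
      unfolding G_def using d1 fx by (auto intro!: derivative_eq_intros simp: field_simps)
    then have "g1 x = f1 x / f x" using DERIV_unique dG[OF x] by blast
    then show ?thesis using d1 fx by simp
  qed
  have fG: "f x = exp (G x)" if "x \<ge> t0" for x using fpos[OF that] by (simp add: G_def)
  have g1_mono: "g1 x \<le> g1 y" if "a \<le> x" "x \<le> y" for x y
  proof -
    have "(\<lambda>_. 0::real) y - (\<lambda>_. 0) x \<le> g1 y - g1 x"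
    proof (rule cmp_deriv[OF that(2)])
      fix s assume s: "x \<le> s" "s \<le> y"
      then have s0: "s > t0" using a that by auto
      show "(g1 has_real_derivative g2 s) (at s)" using dg1[OF s0] .
      show "((\<lambda>_. 0::real) has_real_derivative 0) (at s)" by simp
      show "0 \<le> g2 s" using g2pos[of s] s0 by simp
    qed
    then show ?thesis by simp
  qed
  have G_mono: "G x \<le> G y" if "a \<le> x" "x \<le> y" for x y
  proof -
    have "(\<lambda>_. 0::real) y - (\<lambda>_. 0) x \<le> G y - G x"
    proof (rule cmp_deriv[OF that(2)])
      fix s assume s: "x \<le> s" "s \<le> y"
      then have s0: "s > t0" using a that by auto
      show "(G has_real_derivative g1 s) (at s)" using dG[OF s0] .
      show "((\<lambda>_. 0::real) has_real_derivative 0) (at s)" by simp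
      show "0 \<le> g1 s" using g1pos[of s] s0 by simp
    qed
    then show ?thesis by simp
  qed
  have f_mono: "f x \<le> f y" if "a \<le> x" "x \<le> y" for x y
    using G_mono[OF that] fG[of x] fG[of y] that a by simp
  define c0 where "c0 = g1 a"
  have c0: "c0 > 0" using g1pos a by (simp add: c0_def)
  have G_lin: "G a + c0 * (x - a) \<le> G x" if "a \<le> x" for x
  proof -
    have "(\<lambda>s. c0 * s) x - (\<lambda>s. c0 * s) a \<le> G x - G a"
      using cmp_deriv[of a x G g1 "\<lambda>s. c0 * s" "\<lambda>_. c0"] that a dG g1_mono
      by (auto simp: c0_def intro!: derivative_eq_intros)
    then show ?thesis by (simp add: algebra_simps)
  qed
  have GlimTop: "filterlim G at_top at_top"
  proof (subst filterlim_at_top, intro allI)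
    fix Z :: real
    show "eventually (\<lambda>x. Z \<le> G x) at_top"
      unfolding eventually_at_top_linorder
    proof (intro exI[of _ "max a (a + (Z - G a) / c0)"] allI impI)
      fix x assume x: "max a (a + (Z - G a) / c0) \<le> x"
      have "Z - G a \<le> c0 * (x - a)" using x c0 by (auto simp: field_simps)
      then show "Z \<le> G x" using G_lin[of x] x by auto
    qed
  qed
  define A where "A = f a / g1 a - F a"
  have Flow: "F x \<ge> f x / g1 x - A" if x: "a \<le> x" for x
  proof -
    have "(\<lambda>_. 0::real) x - (\<lambda>_. 0) a \<le> (\<lambda>s. F s - f s / g1 s) x - (\<lambda>s. F s - f s / g1 s) a"
    proof (rule cmp_deriv[OF x])
      fix s assume s: "a \<le> s" "s \<le> x"
      then have s0: "s > t0" "s > 0" using a by auto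
      show "((\<lambda>s. F s - f s / g1 s) has_real_derivative
              f s - ((f s * g1 s) * g1 s - f s * g2 s) / (g1 s * g1 s)) (at s)"
        using g1pos[of s] s0 by (intro DERIV_diff DERIV_divide dF df dg1) auto
      show "((\<lambda>_. 0::real) has_real_derivative 0) (at s)" by simp
      have "f s - ((f s * g1 s) * g1 s - f s * g2 s) / (g1 s * g1 s) = f s * g2 s / (g1 s * g1 s)"
        using g1pos[of s] s0 by (simp add: field_simps)
      also have "\<dots> \<ge> 0" using g1pos[of s] g2pos[of s] fpos[of s] s0 by simp
      finally show "0 \<le> f s - ((f s * g1 s) * g1 s - f s * g2 s) / (g1 s * g1 s)" .
    qed
    then show ?thesis by (simp add: A_def)
  qed
  have Qlim: "((\<lambda>t. G t * g2 t / (g1 t)\<^sup>2) \<longlongrightarrow> 1 / q) at_top"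
  proof -
    have "((\<lambda>t. inverse ((g1 t)\<^sup>2 / (ln (f t) * g2 t))) \<longlongrightarrow> inverse q) at_top"
      using q1 by (intro tendsto_inverse lim_q) auto
    then show ?thesis by (simp add: G_def inverse_eq_divide)
  qed
  define E where "E = (\<lambda>s. F s * ln (F s) / f s)"
  have main: "eventually (\<lambda>t. deriv E t \<le> 1 - 1/q + 3*e) at_top" if e: "0 < e" "e < 1/q" for e
  proof -
    define c where "c = 1/q - e"
    have c: "c > 0" using e by (simp add: c_def)
    have ev1: "eventually (\<lambda>t. G t * g2 t / (g1 t)\<^sup>2 > c) at_top"
      using order_tendstoD(1)[OF Qlim] e by (simp add: c_def)
    have ev2: "eventually (\<lambda>t. G t * g2 t / (g1 t)\<^sup>2 < 2) at_top"
    proof (rule order_tendstoD(2)[OF Qlim])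
      show "1 / q < 2" using q1 by (simp add: divide_simps)
    qed
    have ev3: "eventually (\<lambda>t. 2 \<le> G t) at_top"
      using GlimTop by (simp add: filterlim_at_top)
    have ev4: "eventually (\<lambda>t. a \<le> t) at_top" by (rule eventually_ge_at_top)
    obtain T where T: "\<And>t. t \<ge> T \<Longrightarrow> G t * g2 t / (g1 t)\<^sup>2 > c \<and> G t * g2 t / (g1 t)\<^sup>2 < 2
        \<and> 2 \<le> G t \<and> a \<le> t"
      using eventually_conj[OF ev1 eventually_conj[OF ev2 eventually_conj[OF ev3 ev4]]]
      unfolding eventually_at_top_linorder by blast
    have Ta: "a \<le> T" using T by auto
    define K where "K = ln (g1 T) - 2 * ln (G T)"
    have lng1: "ln (g1 x) \<le> K + 2 * ln (G x)" if x: "T \<le> x" for x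
    proof -
      have "(\<lambda>s. ln (g1 s)) x - (\<lambda>s. ln (g1 s)) T \<le> (\<lambda>s. 2 * ln (G s)) x - (\<lambda>s. 2 * ln (G s)) T"
      proof (rule cmp_deriv[OF x])
        fix s assume s: "T \<le> s" "s \<le> x"
        then have s0: "s > t0" and Ts: "T \<le> s" using a Ta by auto
        have Gs: "G s > 0" using T[OF Ts] by auto
        have g1s: "g1 s > 0" using g1pos[of s] s0 by simp
        show "((\<lambda>s. 2 * ln (G s)) has_real_derivative 2 * (g1 s / G s)) (at s)"
          using dG[OF s0] Gs by (auto intro!: derivative_eq_intros simp: field_simps)
        show "((\<lambda>s. ln (g1 s)) has_real_derivative g2 s / g1 s) (at s)"
          using dg1[OF s0] g1s by (auto intro!: derivative_eq_intros simp: field_simps)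
        have "g2 s / g1 s = (G s * g2 s / (g1 s)\<^sup>2) * (g1 s / G s)"
          using Gs g1s by (simp add: field_simps power2_eq_square)
        also have "\<dots> \<le> 2 * (g1 s / G s)"
          using T[OF Ts] Gs g1s by (intro mult_right_mono) auto
        finally show "g2 s / g1 s \<le> 2 * (g1 s / G s)" .
      qed
      then show ?thesis by (simp add: K_def)
    qed
    define B where "B = (c * (f T / G T) - A * g1 T) - (F T * g1 T - f T)"
    have phi: "F x * g1 x - f x \<ge> c * (f x / G x) - A * g1 x - B" if x: "T \<le> x" for x
    proof -
      have "(\<lambda>s. c * (f s / G s) - A * g1 s) x - (\<lambda>s. c * (f s / G s) - A * g1 s) T
          \<le> (\<lambda>s. F s * g1 s - f s) x - (\<lambda>s. F s * g1 s - f s) T"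
      proof (rule cmp_deriv[OF x])
        fix s assume s: "T \<le> s" "s \<le> x"
        then have s0: "s > t0" "s > 0" and Ts: "T \<le> s" using a Ta by auto
        have Gs: "G s > 0" using T[OF Ts] by auto
        have g1s: "g1 s > 0" using g1pos[of s] s0 by simp
        have g2s: "g2 s > 0" using g2pos[of s] s0 by simp
        have fs: "f s > 0" using fpos[of s] s0 by simp
        show "((\<lambda>s. F s * g1 s - f s) has_real_derivative F s * g2 s) (at s)"
          by (rule DERIV_cong[OF DERIV_diff[OF DERIV_mult[OF dF[OF s0(2)] dg1[OF s0(1)]] df[OF s0(1)]]])
             (simp add: algebra_simps)
        show "((\<lambda>s. c * (f s / G s) - A * g1 s) has_real_derivative
            c * ((f s * g1 s * G s - f s * g1 s) / (G s * G s)) - A * g2 s) (at s)"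
          using Gs by (intro DERIV_diff DERIV_cmult DERIV_divide df dG dg1 s0) auto
        define u where "u = f s * g1 s / G s"
        have u: "u > 0" using fs g1s Gs by (simp add: u_def)
        have i1: "(f s * g1 s * G s - f s * g1 s) / (G s * G s) \<le> u"
        proof -
          have "(f s * g1 s * G s - f s * g1 s) / (G s * G s) = u - f s * g1 s / (G s * G s)"
            using Gs by (simp add: u_def field_simps)
          moreover have "f s * g1 s / (G s * G s) \<ge> 0" using fs g1s Gs by simp
          ultimately show ?thesis by linarith
        qed
        have i2: "c * ((f s * g1 s * G s - f s * g1 s) / (G s * G s)) \<le> c * u"
          using i1 c by (intro mult_left_mono) auto
        have i3: "f s * g2 s / g1 s = (G s * g2 s / (g1 s)\<^sup>2) * u"
          using Gs g1s by (simp add: u_def field_simps power2_eq_square)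
        have i4: "c * u \<le> (G s * g2 s / (g1 s)\<^sup>2) * u"
          using T[OF Ts] u by (intro mult_right_mono) auto
        have i5: "(f s / g1 s - A) * g2 s \<le> F s * g2 s"
          using Flow[of s] s Ta g2s by (intro mult_right_mono) auto
        have i6: "(f s / g1 s - A) * g2 s = f s * g2 s / g1 s - A * g2 s"
          by (simp add: algebra_simps)
        show "c * ((f s * g1 s * G s - f s * g1 s) / (G s * G s)) - A * g2 s \<le> F s * g2 s"
          using i2 i3 i4 i5 i6 by linarith
      qed
      then show ?thesis by (simp add: B_def algebra_simps)
    qed
    have Fup: "F x - F T \<le> f x * (x - T)" if x: "T \<le> x" for x
    proof -
      have "F x - F T \<le> (\<lambda>s. f x * s) x - (\<lambda>s. f x * s) T"
      proof (rule cmp_deriv[OF x])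
        fix s assume s: "T \<le> s" "s \<le> x"
        then have s0: "s > t0" "s > 0" using a Ta by auto
        show "((\<lambda>s. f x * s) has_real_derivative f x) (at s)"
          by (auto intro!: derivative_eq_intros)
        show "(F has_real_derivative f s) (at s)" using dF[OF s0(2)] .
        show "f s \<le> f x" using f_mono[of s x] s Ta by auto
      qed
      then show ?thesis by (simp add: algebra_simps)
    qed
    define M where "M = abs A + abs B"
    define C3 where "C3 = abs (F T) + 1"
    define N1 where "N1 = ln C3 + a + abs (G a) / c0"
    define N2 where "N2 = 1 / c0 + 1"
    define M1 where "M1 = M * exp K"
    have M: "M \<ge> 0" by (simp add: M_def)
    have M1: "M1 \<ge> 0" using M by (simp add: M1_def)
    have C3: "C3 \<ge> 1" by (simp add: C3_def)
    have N1: "N1 \<ge> 0" using C3 a c0 by (simp add: N1_def)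
    have N2: "N2 > 0" unfolding N2_def by (rule add_pos_pos[OF divide_pos_pos[OF zero_less_one c0] zero_less_one])
    have evA: "eventually (\<lambda>y. exp K * (2 * abs A + 2) \<le> exp y / y ^ 2) at_top"
      using lim4 by (simp add: filterlim_at_top)
    have evB: "eventually (\<lambda>y. abs (ln 2 + K) * (1 / y) + 2 * (ln y / y) < e) at_top"
    proof -
      have "((\<lambda>y. abs (ln 2 + K) * (1 / y) + 2 * (ln y / y)) \<longlongrightarrow> abs (ln 2 + K) * 0 + 2 * 0) at_top"
        by (intro tendsto_add tendsto_mult tendsto_const lim1 lim2)
      then show ?thesis using e by (intro order_tendstoD(2)) auto
    qed
    have evC: "eventually (\<lambda>y. (N1 + N2) * (M1 + M) * (y ^ 3 / exp y) < e) at_top"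
    proof -
      have "((\<lambda>y. (N1 + N2) * (M1 + M) * (y ^ 3 / exp y)) \<longlongrightarrow> (N1 + N2) * (M1 + M) * 0) at_top"
        by (intro tendsto_mult tendsto_const lim3)
      then show ?thesis using e by (intro order_tendstoD(2)) auto
    qed
    have evG: "eventually (\<lambda>t. exp K * (2 * abs A + 2) \<le> exp (G t) / (G t) ^ 2 \<and>
        abs (ln 2 + K) * (1 / G t) + 2 * (ln (G t) / G t) < e \<and>
        (N1 + N2) * (M1 + M) * ((G t) ^ 3 / exp (G t)) < e) at_top"
      by (rule eventually_compose_filterlim[OF _ GlimTop]) (intro eventually_conj evA evB evC)
    obtain T2 where T2: "\<And>t. t \<ge> T2 \<Longrightarrow> exp K * (2 * abs A + 2) \<le> exp (G t) / (G t) ^ 2 \<and>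
        abs (ln 2 + K) * (1 / G t) + 2 * (ln (G t) / G t) < e \<and>
        (N1 + N2) * (M1 + M) * ((G t) ^ 3 / exp (G t)) < e"
      using evG unfolding eventually_at_top_linorder by blast
    show ?thesis
      unfolding eventually_at_top_linorder
    proof (intro exI[of _ "max (max T T2) 1"] allI impI)
      fix x assume "max (max T T2) 1 \<le> x"
      then have xT: "T \<le> x" and xT2: "T2 \<le> x" and x1: "1 \<le> x" by auto
      have xa: "a \<le> x" and x0: "x > t0" "x > 0" using xT Ta a by auto
      note TT = T[OF xT] and TT2 = T2[OF xT2]
      define y where "y = G x"
      have y2: "y \<ge> 2" using TT by (simp add: y_def)
      have fx: "f x = exp y" using fG[of x] x0 by (simp add: y_def)
      have fpx: "f x > 0" using fx by simp
      have g1x: "g1 x > 0" using g1pos[of x] x0 by simp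
      have g1b: "g1 x \<le> exp K * y ^ 2"
      proof -
        have "g1 x = exp (ln (g1 x))" using g1x by simp
        also have "\<dots> \<le> exp (K + 2 * ln y)" using lng1[OF xT] by (simp add: y_def)
        also have "\<dots> = exp K * y ^ 2"
        proof -
          have e1: "exp (K + 2 * ln y) = exp K * exp (2 * ln y)" by (rule exp_add)
          have e2: "exp (2 * ln y) = exp (ln y) * exp (ln y)" by (simp only: mult_2 exp_add)
          have e3: "exp (ln y) = y" using y2 by simp
          show ?thesis using e1 e2 e3 by (simp add: power2_eq_square)
        qed
        finally show ?thesis .
      qed
      have fbig: "(2 * abs A + 2) * g1 x \<le> f x"
      proof -
        have "exp K * (2 * abs A + 2) * y ^ 2 \<le> exp y"
          using TT2 y2 by (simp add: y_def field_simps)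
        moreover have "(2 * abs A + 2) * g1 x \<le> (2 * abs A + 2) * (exp K * y ^ 2)"
          using g1b by (intro mult_left_mono) auto
        ultimately show ?thesis using fx by (simp add: algebra_simps)
      qed
      have Fl: "F x \<ge> f x / g1 x - A" using Flow[OF xa] .
      have fg: "f x / g1 x \<ge> 2 * abs A + 2" using fbig g1x by (simp add: field_simps)
      have absA: "A \<le> abs A" by simp
      have F1: "F x \<ge> 1" using Fl fg absA by linarith
      have F2: "F x \<ge> f x / (2 * g1 x)"
      proof -
        have "f x / (2 * g1 x) = (f x / g1 x) / 2" by simp
        then show ?thesis using Fl fg absA by linarith
      qed
      define L where "L = ln (F x)"
      have L0: "L \<ge> 0" using F1 by (simp add: L_def)
      have Llow: "L \<ge> y - ln 2 - K - 2 * ln y"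
      proof -
        have "ln (f x / (2 * g1 x)) \<le> L"
          unfolding L_def using F2 fpx g1x F1 by (subst ln_le_cancel_iff) auto
        moreover have "ln (f x / (2 * g1 x)) = y - ln 2 - ln (g1 x)"
          using fpx g1x fx by (simp add: ln_div ln_mult)
        ultimately show ?thesis using lng1[OF xT] by (simp add: y_def)
      qed
      have Lup: "L \<le> N1 + N2 * y"
      proof -
        have fx1: "f x \<ge> 1" using fx y2 by simp
        have xf1: "x * f x \<ge> 1 * 1" using x1 fx1 by (intro mult_mono) auto
        have "F x \<le> F T + f x * (x - T)" using Fup[OF xT] by simp
        also have "\<dots> \<le> abs (F T) + x * f x"
        proof -
          have "f x * (x - T) \<le> f x * x" using fpx Ta a by (intro mult_left_mono) auto
          moreover have "F T \<le> abs (F T)" by simp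
          ultimately show ?thesis by (simp add: algebra_simps)
        qed
        also have "\<dots> \<le> C3 * (x * f x)"
        proof -
          have "abs (F T) * 1 \<le> abs (F T) * (x * f x)" using xf1 by (intro mult_left_mono) auto
          then show ?thesis by (simp add: C3_def algebra_simps)
        qed
        finally have "F x \<le> C3 * (x * f x)" .
        then have "L \<le> ln (C3 * (x * f x))" unfolding L_def using F1 by (subst ln_le_cancel_iff) auto
        also have "\<dots> = ln C3 + ln x + y" using C3 x0 fpx fx by (simp add: ln_mult)
        also have "ln x \<le> x" using x0 ln_le_minus_one[of x] by simp
        then have "ln C3 + ln x + y \<le> ln C3 + x + y" by simp
        also have "x \<le> a + (y + abs (G a)) / c0"
        proof -
          have "c0 * (x - a) \<le> y + abs (G a)" using G_lin[OF xa] by (simp add: y_def)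
          then show ?thesis using c0 by (simp add: field_simps)
        qed
        then have "ln C3 + x + y \<le> ln C3 + (a + (y + abs (G a)) / c0) + y" by simp
        also have "\<dots> = N1 + N2 * y" using c0 by (simp add: N1_def N2_def field_simps)
        finally show ?thesis .
      qed
      have dE: "(E has_real_derivative 1 + L * (1 - F x * g1 x / f x)) (at x)"
      proof -
        have dl: "((\<lambda>s. ln (F s)) has_real_derivative (1 / F x) * f x) (at x)"
          by (rule DERIV_chain2[OF DERIV_ln_divide dF[OF x0(2)]]) (use F1 in simp)
        have "(E has_real_derivative ((F x * ((1 / F x) * f x) + f x * ln (F x)) * f x - F x * ln (F x) * (f x * g1 x)) / (f x * f x)) (at x)"
          unfolding E_def using fpx
          by (intro DERIV_divide DERIV_mult' df[OF x0(1)] dF[OF x0(2)] dl) auto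
        moreover have "((F x * ((1 / F x) * f x) + f x * ln (F x)) * f x - F x * ln (F x) * (f x * g1 x)) / (f x * f x)
            = 1 + L * (1 - F x * g1 x / f x)"
          using F1 fpx by (simp add: L_def field_simps)
        ultimately show ?thesis by simp
      qed
      have Dx: "deriv E x = 1 + L * (1 - F x * g1 x / f x)" using DERIV_imp_deriv[OF dE] .
      define r1 where "r1 = (F x * g1 x - f x) / f x"
      have Dr: "1 + L * (1 - F x * g1 x / f x) = 1 - L * r1"
        using fpx by (simp add: r1_def field_simps)
      have r1b: "r1 \<ge> c / y - M * (g1 x + 1) / f x"
      proof -
        have "F x * g1 x - f x \<ge> c * (f x / y) - M * g1 x - M"
        proof -
          have "A * g1 x \<le> abs A * g1 x" using g1x by (intro mult_right_mono) auto
          moreover have "abs A * g1 x \<le> M * g1 x" using g1x by (intro mult_right_mono) (auto simp: M_def)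
          moreover have "B \<le> M" by (simp add: M_def)
          ultimately show ?thesis using phi[OF xT] by (simp add: y_def)
        qed
        then have "(F x * g1 x - f x) / f x \<ge> (c * (f x / y) - M * g1 x - M) / f x"
          using fpx by (intro divide_right_mono) auto
        moreover have "(c * (f x / y) - M * g1 x - M) / f x = c / y - M * (g1 x + 1) / f x"
          using fpx y2 by (simp add: field_simps)
        ultimately show ?thesis by (simp add: r1_def)
      qed
      have LG: "L / y \<ge> 1 - e"
      proof -
        have "(ln 2 + K + 2 * ln y) / y \<le> abs (ln 2 + K) * (1 / y) + 2 * (ln y / y)"
        proof -
          have "(ln 2 + K + 2 * ln y) / y = (ln 2 + K) * (1 / y) + 2 * (ln y / y)"
            using y2 by (simp add: field_simps)
          moreover have "(ln 2 + K) * (1 / y) \<le> abs (ln 2 + K) * (1 / y)"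
            using y2 by (intro mult_right_mono) auto
          ultimately show ?thesis by linarith
        qed
        then have "(ln 2 + K + 2 * ln y) / y < e" using TT2 by (simp add: y_def)
        moreover have "L / y \<ge> (y - ln 2 - K - 2 * ln y) / y" using Llow y2 by (intro divide_right_mono) auto
        moreover have "(y - ln 2 - K - 2 * ln y) / y = 1 - (ln 2 + K + 2 * ln y) / y"
          using y2 by (simp add: field_simps)
        ultimately show ?thesis by linarith
      qed
      have term1: "L * (c / y) \<ge> c * (1 - e)"
      proof -
        have "L * (c / y) = c * (L / y)" by simp
        also have "\<dots> \<ge> c * (1 - e)" using LG c by (intro mult_left_mono) auto
        finally show ?thesis .
      qed
      have term2: "L * (M * (g1 x + 1) / f x) \<le> e"
      proof -
        have a1: "M * (g1 x + 1) \<le> (M1 + M) * y ^ 2"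
        proof -
          have "M * (g1 x + 1) \<le> M * (exp K * y ^ 2 + 1)" using g1b M by (intro mult_left_mono) auto
          also have "\<dots> = M1 * y ^ 2 + M" by (simp add: M1_def algebra_simps)
          also have "\<dots> \<le> M1 * y ^ 2 + M * y ^ 2" using M y2
            by (intro add_left_mono) (simp add: mult_le_cancel_left1 one_le_power)
          finally show ?thesis by (simp add: algebra_simps)
        qed
        have a2: "L \<le> (N1 + N2) * y"
        proof -
          have "N1 * 1 \<le> N1 * y" using N1 y2 by (intro mult_left_mono) auto
          then show ?thesis using Lup by (simp add: distrib_right)
        qed
        have "L * (M * (g1 x + 1) / f x) = L * (M * (g1 x + 1)) / exp y" using fx by simp
        also have "\<dots> \<le> ((N1 + N2) * y) * ((M1 + M) * y ^ 2) / exp y"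
        proof -
          have m: "L * (M * (g1 x + 1)) \<le> ((N1 + N2) * y) * ((M1 + M) * y ^ 2)"
            by (rule mult_mono[OF a2 a1]) (use N1 N2 y2 M g1x in auto)
          show ?thesis by (rule divide_right_mono[OF m]) simp
        qed
        also have "\<dots> = (N1 + N2) * (M1 + M) * (y ^ 3 / exp y)" by (simp add: power3_eq_cube power2_eq_square)
        also have "\<dots> < e" using TT2 by (simp add: y_def)
        finally show ?thesis by simp
      qed
      have "deriv E x \<le> 1 - c * (1 - e) + e"
      proof -
        have "L * r1 \<ge> L * (c / y - M * (g1 x + 1) / f x)" using r1b L0 by (intro mult_left_mono) auto
        then have "L * r1 \<ge> L * (c / y) - L * (M * (g1 x + 1) / f x)" by (simp add: algebra_simps)
        then show ?thesis using Dx Dr term1 term2 by linarith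
      qed
      moreover have "c * (1 - e) \<ge> 1/q - 2 * e"
      proof -
        have "c * (1 - e) = 1/q - e/q - e + e * e" using q1 by (simp add: c_def field_simps)
        moreover have "e / q \<le> e" using q1 e by (simp add: divide_le_eq_1 field_simps)
        moreover have "e * e \<ge> 0" by simp
        ultimately show ?thesis by linarith
      qed
      ultimately show "deriv E x \<le> 1 - 1/q + 3 * e" by linarith
    qed
  qed
  have Lim1: "Limsup at_top (\<lambda>t. ereal (deriv E t)) \<le> ereal (1 - 1/q)"
  proof (rule ereal_le_epsilon2)
    fix d :: real assume d: "0 < d"
    define e where "e = min (d/3) (1/(2*q))"
    have qpos: "q > 0" using q1 by simp
    have e: "0 < e" "e < 1/q"
    proof -
      show "0 < e" using d qpos by (simp add: e_def)
      have "e \<le> 1/(2*q)" by (simp add: e_def)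
      also have "\<dots> < 1/q" using qpos by (simp add: field_simps)
      finally show "e < 1/q" .
    qed
    have "Limsup at_top (\<lambda>t. ereal (deriv E t)) \<le> ereal (1 - 1/q + 3*e)"
      by (rule Limsup_bounded) (use main[OF e] in \<open>auto elim: eventually_mono\<close>)
    also have "\<dots> \<le> ereal (1 - 1/q) + ereal d"
    proof -
      have "e \<le> d/3" by (simp add: e_def)
      then show ?thesis by simp
    qed
    finally show "Limsup at_top (\<lambda>t. ereal (deriv E t)) \<le> ereal (1 - 1/q) + ereal d" .
  qed
  have prel: "ereal (1 - 1/q) \<le> 1/p"
  proof (cases "q = 1")
    case True
    have "0 \<le> 1/p" using qp by (cases p) auto
    then show ?thesis using True by (simp add: zero_ereal_def)
  next
    case False
    then have q1': "q > 1" and p0: "0 < p" "p < \<infinity>" using qp by auto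
    then obtain r where r: "p = ereal r" "r > 0" by (cases p) auto
    have rq: "r * (q - 1) \<le> q"
    proof (rule ccontr)
      assume nrq: "\<not> r * (q - 1) \<le> q"
      define \<kappa> where "\<kappa> = r - 1 - r / q"
      have \<kappa>: "\<kappa> > 0"
      proof -
        have "q < r * q - r" using nrq by (simp add: algebra_simps)
        then have "1 < r - r / q" using q1' by (simp add: field_simps)
        then show ?thesis by (simp add: \<kappa>_def)
      qed
      define w where "w = (\<lambda>t. t * g1 t / G t)"
      have wlim: "(w \<longlongrightarrow> r) at_top" using lim_p r by (simp add: w_def G_def)
      define R where "R = (\<lambda>t. 1 + w t * (G t * g2 t / (g1 t)\<^sup>2) - w t)"
      have Rlim: "(R \<longlongrightarrow> 1 + r * (1/q) - r) at_top"
        unfolding R_def by (intro tendsto_intros wlim Qlim)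
      have "1 + r * (1/q) - r = - \<kappa>" by (simp add: \<kappa>_def)
      then have evR: "eventually (\<lambda>t. R t < - \<kappa> / 2) at_top"
        using Rlim \<kappa> by (intro order_tendstoD(2)) auto
      have evG: "eventually (\<lambda>t. 2 \<le> G t) at_top"
        using GlimTop by (simp add: filterlim_at_top)
      obtain T where T: "\<And>t. t \<ge> T \<Longrightarrow> R t < - \<kappa> / 2 \<and> 2 \<le> G t \<and> a \<le> t"
        using eventually_conj[OF evR eventually_conj[OF evG eventually_ge_at_top[of a]]]
        unfolding eventually_at_top_linorder by blast
      have Ta: "a \<le> T" using T by auto
      define k where "k = (\<lambda>s. ln s + ln (g1 s) - ln (G s))"
      define C where "C = k T + (\<kappa>/2) * ln T"
      have kb: "k x \<le> C - (\<kappa>/2) * ln x" if x: "T \<le> x" for x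
      proof -
        have "k x - k T \<le> (\<lambda>s. - (\<kappa>/2) * ln s) x - (\<lambda>s. - (\<kappa>/2) * ln s) T"
        proof (rule cmp_deriv[OF x])
          fix s assume s: "T \<le> s" "s \<le> x"
          then have s0: "s > t0" "s > 0" and Ts: "T \<le> s" using a Ta by auto
          have Gs: "G s > 0" using T[OF Ts] by auto
          have g1s: "g1 s > 0" using g1pos[of s] s0 by simp
          show "((\<lambda>s. - (\<kappa>/2) * ln s) has_real_derivative - (\<kappa>/2) * (1 / s)) (at s)"
            by (rule DERIV_cmult[OF DERIV_ln_divide[OF s0(2)]])
          show "(k has_real_derivative 1 / s + 1 / g1 s * g2 s - 1 / G s * g1 s) (at s)"
            unfolding k_def
            by (intro DERIV_diff DERIV_add DERIV_ln_divide[OF s0(2)]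
                  DERIV_chain2[OF DERIV_ln_divide[OF g1s] dg1[OF s0(1)]]
                  DERIV_chain2[OF DERIV_ln_divide[OF Gs] dG[OF s0(1)]])
          have "1 / s + 1 / g1 s * g2 s - 1 / G s * g1 s = R s / s"
            using Gs g1s s0 by (simp add: R_def w_def field_simps power2_eq_square)
          also have "\<dots> \<le> (- \<kappa> / 2) / s" using T[OF Ts] s0 by (intro divide_right_mono) auto
          also have "\<dots> = - (\<kappa>/2) * (1 / s)" by simp
          finally show "1 / s + 1 / g1 s * g2 s - 1 / G s * g1 s \<le> - (\<kappa>/2) * (1 / s)" .
        qed
        then show ?thesis by (simp add: C_def algebra_simps)
      qed
      have evw: "eventually (\<lambda>t. ln r - 1 < ln (w t)) at_top"
        using tendsto_ln[OF wlim] r by (intro order_tendstoD(1)) auto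
      have evl: "eventually (\<lambda>t. 2 * (C - ln r + 1) / \<kappa> \<le> ln t) at_top"
        using ln_at_top by (simp add: filterlim_at_top)
      obtain x where x: "ln r - 1 < ln (w x)" "2 * (C - ln r + 1) / \<kappa> \<le> ln x" "T \<le> x"
        using eventually_conj[OF evw eventually_conj[OF evl eventually_ge_at_top[of T]]]
        unfolding eventually_at_top_linorder by blast
      have x0: "x > t0" "x > 0" using x Ta a by auto
      have Gx: "G x > 0" using T[OF x(3)] by auto
      have g1x: "g1 x > 0" using g1pos[of x] x0 by simp
      have "ln (w x) = k x" using x0 Gx g1x by (simp add: w_def k_def ln_div ln_mult)
      moreover have "k x \<le> C - (\<kappa>/2) * ln x" using kb[OF x(3)] .
      moreover have "(\<kappa>/2) * ln x \<ge> C - ln r + 1"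
      proof -
        have "(\<kappa>/2) * (2 * (C - ln r + 1) / \<kappa>) \<le> (\<kappa>/2) * ln x"
          using x(2) \<kappa> by (intro mult_left_mono) auto
        then show ?thesis using \<kappa> by simp
      qed
      ultimately show False using x(1) by linarith
    qed
    have "1 - 1/q \<le> 1/r" using rq q1' r by (simp add: field_simps)
    moreover have "1 / ereal r = ereal (1 / r)" using r by (simp add: one_ereal_def)
    ultimately show ?thesis using r by simp
  qed
  have "(\<lambda>s. integral {0..s} f * ln (integral {0..s} f) / f s) = E" by (simp add: E_def F_def)
  then show ?thesis using Lim1 prel by simp
qed

end
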